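(* Let $\alpha,\beta,\gamma\in\mathbb{Z}[i]$ satisfy $\alpha^2+\beta^2+\gamma^2=0$, $\alpha\beta\gamma\neq 0$, and $\gcd(\alpha,\beta)\in U$. Then, after multiplying each of $\alpha,\beta,\gamma$ by a suitable unit and permuting the three coordinates, one obtains a triple $(X,Y,Z)$ satisfying $X^2+Y^2=Z^2$ with $X,Z\in O^I$, $Y=(1+i)^{2+a_1}p_2^{a_2}\cdots p_m^{a_m}$ (integers $a_j\ge 0$, $p_2,\dots,p_m$ distinct Gaussian primes lying in $O^I$), $\gcd(X,Y)\in U$ and $XYZ\neq 0$. Conversely, if $(X,Y,Z)\in\mathbb{Z}[i]^3$ satisfies $X^2+Y^2=Z^2$, $\gcd(X,Y)\in U$ and $XYZ\neq 0$, then $(X,Y,iZ)$ satisfies $X^2+Y^2+(iZ)^2=0$ with the same conditions.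
   Context: $\mathbb{Z}[i]$ is the ring of Gaussian integers, $U=\{1,-1,i,-i\}$ its unit group; for $\alpha\in\mathbb{Z}[i]$, $R(\alpha)$ and $I(\alpha)$ denote its real and imaginary parts. $\gcd(x,y)\in U$ means $x,y$ have no common non-unit divisor. $O=\{\alpha\in\mathbb{Z}[i]: R(\alpha)+I(\alpha)\equiv 1 \pmod 2\}$ is the set of odd Gaussian integers (those not divisible by $1+i$), and $O^I=\{\alpha\in O: R(\alpha)\equiv 1\pmod 4\}$. *)

theory Defs
  imports "HOL-Analysis.Analysis" "HOL-Library.Multiset"
begin

definition GI :: "complex set" where
  "GI = {z. Re z \<in> \<int> \<and> Im z \<in> \<int>}"

definition GU :: "complex set" where
  "GU = {1, -1, \<i>, -\<i>}"

definition gdvd :: "complex \<Rightarrow> complex \<Rightarrow> bool" where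
  "gdvd a b \<longleftrightarrow> (\<exists>c\<in>GI. b = a * c)"

text \<open>gcd(a,b) is a unit: every common divisor in Z[i] is a unit.\<close>
definition gcoprime :: "complex \<Rightarrow> complex \<Rightarrow> bool" where
  "gcoprime a b \<longleftrightarrow> (\<forall>d\<in>GI. gdvd d a \<and> gdvd d b \<longrightarrow> d \<in> GU)"

definition gprime :: "complex \<Rightarrow> bool" where
  "gprime p \<longleftrightarrow> p \<in> GI \<and> p \<noteq> 0 \<and> p \<notin> GU \<and>
     (\<forall>a\<in>GI. \<forall>b\<in>GI. gdvd p (a * b) \<longrightarrow> gdvd p a \<or> gdvd p b)"

definition GO :: "complex set" where
  "GO = {z \<in> GI. odd (\<lfloor>Re z\<rfloor> + \<lfloor>Im z\<rfloor>)}"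

definition GOI :: "complex set" where
  "GOI = {z \<in> GO. \<lfloor>Re z\<rfloor> mod 4 = 1}"

end

theory Submission
  imports Defs
begin



lemma GI_iff: "z \<in> GI \<longleftrightarrow> (\<exists>a b::int. z = Complex (of_int a) (of_int b))"
proof
  assume "z \<in> GI"
  then obtain a b where "Re z = of_int a" "Im z = of_int b" unfolding GI_def by (auto elim!: Ints_cases)
  then show "\<exists>a b::int. z = Complex (of_int a) (of_int b)" by (metis complex_surj)
qed (auto simp: GI_def)

lemma GI_cases: assumes "z \<in> GI" obtains a b :: int where "z = Complex (of_int a) (of_int b)"
  using assms GI_iff by blast

lemma GI_Complex[simp]: "Complex (of_int a) (of_int b) \<in> GI"
  using GI_iff by blast

lemma GI_add[simp,intro]: "z \<in> GI \<Longrightarrow> w \<in> GI \<Longrightarrow> z + w \<in> GI"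
  unfolding GI_def by auto
lemma GI_diff[simp,intro]: "z \<in> GI \<Longrightarrow> w \<in> GI \<Longrightarrow> z - w \<in> GI"
  unfolding GI_def by auto
lemma GI_minus[simp,intro]: "z \<in> GI \<Longrightarrow> - z \<in> GI"
  unfolding GI_def by auto
lemma GI_mult[simp,intro]: "z \<in> GI \<Longrightarrow> w \<in> GI \<Longrightarrow> z * w \<in> GI"
  unfolding GI_def by auto
lemma GI_1[simp,intro]: "1 \<in> GI" and GI_0[simp,intro]: "0 \<in> GI" and GI_i[simp,intro]: "\<i> \<in> GI"
  unfolding GI_def by auto
lemma GI_numeral[simp,intro]: "numeral n \<in> GI" unfolding GI_def by auto
lemma GI_power[simp,intro]: "z \<in> GI \<Longrightarrow> z ^ n \<in> GI"
  by (induction n) auto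
lemma GI_prod[intro]: "(\<And>x. x \<in> A \<Longrightarrow> f x \<in> GI) \<Longrightarrow> prod f A \<in> GI"
  by (induction A rule: infinite_finite_induct) auto
lemma GU_GI: "u \<in> GU \<Longrightarrow> u \<in> GI" unfolding GU_def by auto
lemma GU_mult: "u \<in> GU \<Longrightarrow> v \<in> GU \<Longrightarrow> u * v \<in> GU" unfolding GU_def by auto
lemma GU_inv: "u \<in> GU \<Longrightarrow> \<exists>v\<in>GU. u * v = 1" unfolding GU_def
  by (auto intro: bexI[of _ 1] bexI[of _ "-1"] bexI[of _ "\<i>"] bexI[of _ "-\<i>"])
lemma GU_sq: "u \<in> GU \<Longrightarrow> u^2 = 1 \<or> u^2 = -1" unfolding GU_def by (auto simp: power2_eq_square)
lemma GU_nz: "u \<in> GU \<Longrightarrow> u \<noteq> 0" unfolding GU_def by auto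

definition gn :: "complex \<Rightarrow> nat" where "gn z = nat (\<lfloor>Re z\<rfloor>^2 + \<lfloor>Im z\<rfloor>^2)"

lemma gn_real: "z \<in> GI \<Longrightarrow> real (gn z) = (cmod z)^2"
proof -
  assume "z \<in> GI" then obtain a b where z: "z = Complex (of_int a) (of_int b)" by (rule GI_cases)
  have "real (gn z) = of_int (a^2+b^2)" unfolding gn_def z by simp
  also have "\<dots> = (cmod z)^2" unfolding z cmod_def by simp
  finally show ?thesis .
qed

lemma gn_mult: "z \<in> GI \<Longrightarrow> w \<in> GI \<Longrightarrow> gn (z*w) = gn z * gn w"
proof -
  assume a: "z \<in> GI" "w \<in> GI"
  have "real (gn (z*w)) = real (gn z * gn w)" using a by (simp add: gn_real norm_mult power_mult_distrib)
  then show ?thesis by linarith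
qed

lemma gn_0_iff: "z \<in> GI \<Longrightarrow> gn z = 0 \<longleftrightarrow> z = 0"
proof -
  assume "z \<in> GI" then have "real (gn z) = (cmod z)^2" by (rule gn_real)
  then show ?thesis by auto
qed

lemma gn_1_iff: "z \<in> GI \<Longrightarrow> gn z = 1 \<longleftrightarrow> z \<in> GU"
proof -
  assume "z \<in> GI" then obtain a b where z: "z = Complex (of_int a) (of_int b)" by (rule GI_cases)
  have g: "gn z = nat (a^2+b^2)" unfolding gn_def z by simp
  show ?thesis
  proof
    assume "gn z = 1" then have e: "a^2+b^2 = 1" using g by simp
    then have "a^2 \<le> 1" "b^2 \<le> 1" using zero_le_power2[of a] zero_le_power2[of b] by linarith+
    then have "\<bar>a\<bar> \<le> 1" "\<bar>b\<bar> \<le> 1" by (simp_all add: abs_square_le_1)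
    then have "a \<in> {-1,0,1}" "b \<in> {-1,0,1}" by auto
    then have "(a = 1 \<and> b = 0) \<or> (a = -1 \<and> b = 0) \<or> (a = 0 \<and> b = 1) \<or> (a = 0 \<and> b = -1)"
      using e by auto
    then show "z \<in> GU" unfolding z GU_def by (auto simp: complex_eq_iff)
  next
    assume "z \<in> GU" then have "z = 1 \<or> z = -1 \<or> z = \<i> \<or> z = -\<i>" unfolding GU_def by auto
    then show "gn z = 1" unfolding gn_def by (auto simp: power2_eq_square floor_minus)
  qed
qed

lemma gdvd_GU: "d \<in> GI \<Longrightarrow> gdvd d 1 \<Longrightarrow> d \<in> GU"
proof -
  assume d: "d \<in> GI" "gdvd d 1"
  then obtain c where c: "c \<in> GI" "1 = d * c" unfolding gdvd_def by auto
  then have "gn d * gn c = 1" using gn_mult[OF d(1) c(1)] by (simp add: gn_def)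
  then show ?thesis using gn_1_iff d by simp
qed



lemma gdvd_refl: "z \<in> GI \<Longrightarrow> gdvd z z" unfolding gdvd_def by (auto intro: bexI[of _ 1])
lemma gdvd_trans: "gdvd a b \<Longrightarrow> gdvd b c \<Longrightarrow> gdvd a c"
  unfolding gdvd_def by (metis GI_mult mult.assoc)
lemma gdvd_mult_right: "gdvd a b \<Longrightarrow> c \<in> GI \<Longrightarrow> gdvd a (b * c)"
  unfolding gdvd_def by (metis GI_mult mult.assoc)
lemma gdvd_mult_left: "gdvd a b \<Longrightarrow> c \<in> GI \<Longrightarrow> gdvd a (c * b)"
  using gdvd_mult_right by (metis mult.commute)
lemma gdvd_add: "gdvd a b \<Longrightarrow> gdvd a c \<Longrightarrow> gdvd a (b + c)"
  unfolding gdvd_def by (metis GI_add distrib_left)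
lemma gdvd_self_mult: "a \<in> GI \<Longrightarrow> c \<in> GI \<Longrightarrow> gdvd a (a * c)"
  unfolding gdvd_def by auto
lemma gdvd_unit_cancel: "gdvd d (u * a) \<Longrightarrow> u \<in> GU \<Longrightarrow> gdvd d a"
proof -
  assume "gdvd d (u * a)" "u \<in> GU"
  then obtain v where v: "v \<in> GU" "u * v = 1" using GU_inv by blast
  have "gdvd d (u * a * v)" using gdvd_mult_right \<open>gdvd d (u*a)\<close> GU_GI v(1) by blast
  moreover have "u * a * v = a" using v(2) by (simp add: algebra_simps)
  ultimately show ?thesis by simp
qed

lemma gcoprime_sym: "gcoprime a b \<Longrightarrow> gcoprime b a" unfolding gcoprime_def by blast
lemma gcoprime_units: "gcoprime a b \<Longrightarrow> u \<in> GU \<Longrightarrow> v \<in> GU \<Longrightarrow> gcoprime (u * a) (v * b)"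
  unfolding gcoprime_def using gdvd_unit_cancel by blast

lemma div_rem:
  assumes a: "a \<in> GI" and b: "b \<in> GI" "b \<noteq> 0"
  shows "\<exists>q\<in>GI. gn (a - b * q) < gn b"
proof -
  define z where "z = a / b"
  define q where "q = Complex (of_int (round (Re z))) (of_int (round (Im z)))"
  have q: "q \<in> GI" unfolding q_def by simp
  have r1: "\<bar>Re (z - q)\<bar> \<le> 1/2" unfolding q_def using of_int_round_abs_le[of "Re z"] by (simp add: abs_minus_commute)
  have r2: "\<bar>Im (z - q)\<bar> \<le> 1/2" unfolding q_def using of_int_round_abs_le[of "Im z"] by (simp add: abs_minus_commute)
  have "(cmod (z - q))^2 = (Re (z-q))^2 + (Im (z-q))^2" by (simp add: cmod_def)
  also have "\<dots> \<le> 1/4 + 1/4"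
  proof -
    have "(Re (z-q))^2 \<le> (1/2)^2" using r1 by (metis abs_ge_zero power_mono power2_abs)
    moreover have "(Im (z-q))^2 \<le> (1/2)^2" using r2 by (metis abs_ge_zero power_mono power2_abs)
    ultimately show ?thesis by (simp add: power2_eq_square)
  qed
  finally have zq: "(cmod (z - q))^2 \<le> 1/2" by simp
  have e: "a - b * q = b * (z - q)" unfolding z_def using b(2) by (simp add: algebra_simps)
  have "a - b*q \<in> GI" using a b q by auto
  then have "real (gn (a - b*q)) = (cmod (a - b*q))^2" by (rule gn_real)
  also have "\<dots> = (cmod b)^2 * (cmod (z-q))^2" unfolding e by (simp add: norm_mult power_mult_distrib)
  finally have "real (gn (a - b*q)) = (cmod b)^2 * (cmod (z-q))^2" .
  then have "real (gn (a - b*q)) = (cmod b)^2 * (cmod (z-q))^2" .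
  also have "\<dots> \<le> (cmod b)^2 * (1/2)" using zq by (intro mult_left_mono) auto
  also have "\<dots> < (cmod b)^2" using b(2) by simp
  also have "\<dots> = real (gn b)" using gn_real b(1) by simp
  finally show ?thesis using q by auto
qed

lemma not_gcoprime_00: "\<not> gcoprime 0 0"
proof
  assume "gcoprime 0 0"
  moreover have "gdvd 2 0" unfolding gdvd_def by (auto intro: bexI[of _ 0])
  moreover have "(2::complex) \<in> GI" by simp
  ultimately have "(2::complex) \<in> GU" unfolding gcoprime_def by blast
  then show False unfolding GU_def by (auto simp: complex_eq_iff)
qed

lemma bezout:
  assumes a: "a \<in> GI" and b: "b \<in> GI" and c: "gcoprime a b"
  shows "\<exists>x\<in>GI. \<exists>y\<in>GI. a * x + b * y = 1"
proof -
  define S where "S = {d. \<exists>x\<in>GI. \<exists>y\<in>GI. d = a * x + b * y \<and> d \<noteq> 0}"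
  have "a \<noteq> 0 \<or> b \<noteq> 0" using c not_gcoprime_00 by auto
  then have "\<exists>d. d \<in> S"
  proof
    assume "a \<noteq> 0"
    have "a = a * 1 + b * 0" by simp
    then have "a \<in> S" unfolding S_def using \<open>a \<noteq> 0\<close> GI_0 GI_1 by blast
    then show ?thesis by blast
  next
    assume "b \<noteq> 0"
    have "b = a * 0 + b * 1" by simp
    then have "b \<in> S" unfolding S_def using \<open>b \<noteq> 0\<close> GI_0 GI_1 by blast
    then show ?thesis by blast
  qed
  then obtain d where dS: "d \<in> S" and dmin: "\<And>e. e \<in> S \<Longrightarrow> gn d \<le> gn e"
    using ex_has_least_nat[of "\<lambda>d. d \<in> S" _ gn] by blast
  from dS obtain x y where xy: "x \<in> GI" "y \<in> GI" "d = a * x + b * y" "d \<noteq> 0" unfolding S_def by blast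
  have dGI: "d \<in> GI" using xy a b by auto
  have dv: "gdvd d t" if t: "t \<in> {a, b}" for t
  proof -
    have tGI: "t \<in> GI" using t a b by auto
    obtain q where q: "q \<in> GI" "gn (t - d * q) < gn d" using div_rem[OF tGI dGI xy(4)] by blast
    have "t - d * q = 0"
    proof (rule ccontr)
      assume nz: "t - d * q \<noteq> 0"
      have "t - d * q \<in> S"
      proof (cases "t = a")
        case True
        have "t - d * q = a * (1 - x * q) + b * (- y * q)" using True xy(3) by (simp add: algebra_simps)
        then show ?thesis unfolding S_def using nz xy q by blast
      next
        case False then have "t = b" using t by auto
        have "t - d * q = a * (- x * q) + b * (1 - y * q)" using \<open>t = b\<close> xy(3) by (simp add: algebra_simps)
        then show ?thesis unfolding S_def using nz xy q by blast
      qed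
      then show False using dmin q(2) by fastforce
    qed
    then show ?thesis unfolding gdvd_def using q by auto
  qed
  have "d \<in> GU" using c dv dGI unfolding gcoprime_def by auto
  then obtain v where v: "v \<in> GU" "d * v = 1" using GU_inv by blast
  have "a * (x * v) + b * (y * v) = 1" using v(2) xy(3) by (simp add: algebra_simps)
  then show ?thesis using xy v GU_GI by blast
qed

lemma euclid:
  assumes "a \<in> GI" "b \<in> GI" "c \<in> GI" "gcoprime a b" "gdvd a (b * c)"
  shows "gdvd a c"
proof -
  obtain x y where xy: "x \<in> GI" "y \<in> GI" "a * x + b * y = 1" using bezout assms by blast
  have "c = a * (c * x) + (b * c) * y" using xy(3) by (metis distrib_left mult.assoc mult.commute mult_1_right)
  moreover have "gdvd a (a * (c * x))" using assms xy by (simp add: gdvd_self_mult)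
  moreover have "gdvd a ((b * c) * y)" using assms xy gdvd_mult_right by blast
  ultimately show ?thesis using gdvd_add by metis
qed

lemma cop3:
  assumes abc: "a \<in> GI" "b \<in> GI" "c \<in> GI" and e: "a^2 + b^2 + c^2 = 0" and cp: "gcoprime a b"
  shows "gcoprime a c"
  unfolding gcoprime_def
proof (intro ballI impI)
  fix d assume d: "d \<in> GI" "gdvd d a \<and> gdvd d c"
  obtain x y where xy: "x \<in> GI" "y \<in> GI" "a * x + b * y = 1" using bezout abc cp by blast
  have "1 = a * (a * x^2 + 2 * b * x * y) + b^2 * y^2"
    using arg_cong[OF xy(3), of "\<lambda>t. t^2"] by (simp add: power2_eq_square algebra_simps)
  also have "b^2 = a * (-a) + c * (-c)"
  proof -
    have "b^2 = (a^2 + b^2 + c^2) - a^2 - c^2" by simp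
    also have "\<dots> = a * (-a) + c * (-c)" using e by (simp add: power2_eq_square)
    finally show ?thesis .
  qed
  finally have one: "1 = a * (a * x^2 + 2 * b * x * y + (-a) * y^2) + c * ((-c) * y^2)"
    by (simp add: algebra_simps)
  have "gdvd d (a * (a * x^2 + 2 * b * x * y + (-a) * y^2))" using d abc xy gdvd_mult_right by auto
  moreover have "gdvd d (c * ((-c) * y^2))" using d abc xy gdvd_mult_right
    by (metis GI_minus GI_mult GI_power mult.commute)
  ultimately have "gdvd d 1" using one gdvd_add by metis
  then show "d \<in> GU" using gdvd_GU d by blast
qed



lemma floor_Re[simp]: "\<lfloor>Re (Complex (of_int a) (of_int b))\<rfloor> = a" by simp
lemma floor_Im[simp]: "\<lfloor>Im (Complex (of_int a) (of_int b))\<rfloor> = b" by simp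

lemma GO_iff: "Complex (of_int a) (of_int b) \<in> GO \<longleftrightarrow> odd (a + b)"
  unfolding GO_def by simp

lemma GOI_iff: "Complex (of_int a) (of_int b) \<in> GOI \<longleftrightarrow> odd (a + b) \<and> a mod 4 = 1"
  unfolding GOI_def GO_def by simp

lemma GO_GI: "z \<in> GO \<Longrightarrow> z \<in> GI" unfolding GO_def by auto
lemma GOI_GO: "z \<in> GOI \<Longrightarrow> z \<in> GO" unfolding GOI_def by auto

lemma dvd1i: "gdvd (1 + \<i>) (Complex (of_int a) (of_int b)) \<longleftrightarrow> even (a + b)"
proof
  assume "gdvd (1 + \<i>) (Complex (of_int a) (of_int b))"
  then obtain c where c: "c \<in> GI" "Complex (of_int a) (of_int b) = (1 + \<i>) * c" unfolding gdvd_def by auto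
  obtain x y where xy: "c = Complex (of_int x) (of_int y)" using c(1) by (rule GI_cases)
  have "Complex (of_int a) (of_int b) = Complex (of_int (x - y)) (of_int (x + y))"
    using c(2) unfolding xy by (simp add: complex_eq_iff)
  then have "a = x - y" "b = x + y" by (simp_all add: complex_eq_iff)
  then show "even (a + b)" by simp
next
  assume "even (a + b)"
  then obtain k where k: "a + b = 2 * k" by (rule evenE)
  define c where "c = Complex (of_int k) (of_int (b - k))"
  have "Complex (of_int a) (of_int b) = (1 + \<i>) * c" unfolding c_def using k
    by (simp add: complex_eq_iff)
  moreover have "c \<in> GI" unfolding c_def by (rule GI_Complex)
  ultimately show "gdvd (1 + \<i>) (Complex (of_int a) (of_int b))" unfolding gdvd_def by blast
qed

lemma GO_not_dvd: "z \<in> GI \<Longrightarrow> z \<in> GO \<longleftrightarrow> \<not> gdvd (1 + \<i>) z"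
  by (metis GI_cases GO_iff dvd1i)

lemma GO_dvd: "d \<in> GI \<Longrightarrow> gdvd d w \<Longrightarrow> w \<in> GO \<Longrightarrow> d \<in> GO"
  using GO_not_dvd GO_GI gdvd_trans by blast

lemma GO_nz: "z \<in> GO \<Longrightarrow> z \<noteq> 0" unfolding GO_def by auto

lemma onei_GI[simp]: "1 + \<i> \<in> GI" by auto
lemma onei_notGU: "1 + \<i> \<notin> GU" unfolding GU_def by (auto simp: complex_eq_iff)
lemma gn_onei: "gn (1 + \<i>) = 2" unfolding gn_def by simp

lemma GOI_assoc:
  assumes "z \<in> GO" shows "\<exists>u\<in>GU. u * z \<in> GOI"
proof -
  obtain a b where z: "z = Complex (of_int a) (of_int b)" using assms GO_GI GI_cases by blast
  have o: "odd (a + b)" using assms z GO_iff by simp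
  have "a mod 4 = 1 \<or> a mod 4 = 3 \<or> b mod 4 = 1 \<or> b mod 4 = 3" using o by presburger
  moreover
  { assume "a mod 4 = 1" then have "1 * z \<in> GOI" using o z GOI_iff by simp
    then have ?thesis unfolding GU_def by blast }
  moreover
  { assume h: "a mod 4 = 3"
    have mem: "Complex (of_int (-a)) (of_int (-b)) \<in> GOI" unfolding GOI_iff using o h by presburger
    have "-1 * z = Complex (of_int (-a)) (of_int (-b))" unfolding z by (simp add: complex_eq_iff)
    then have "-1 * z \<in> GOI" using mem by (simp only:)
    then have ?thesis unfolding GU_def by blast }
  moreover
  { assume h: "b mod 4 = 1"
    have mem: "Complex (of_int b) (of_int (-a)) \<in> GOI" unfolding GOI_iff using o h by presburger
    have "-\<i> * z = Complex (of_int b) (of_int (-a))" unfolding z by (simp add: complex_eq_iff)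
    then have "-\<i> * z \<in> GOI" using mem by (simp only:)
    then have ?thesis unfolding GU_def by blast }
  moreover
  { assume h: "b mod 4 = 3"
    have mem: "Complex (of_int (-b)) (of_int a) \<in> GOI" unfolding GOI_iff using o h by presburger
    have "\<i> * z = Complex (of_int (-b)) (of_int a)" unfolding z by (simp add: complex_eq_iff)
    then have "\<i> * z \<in> GOI" using mem by (simp only:)
    then have ?thesis unfolding GU_def by blast }
  ultimately show ?thesis by blast
qed

lemma twoadic:
  assumes "z \<in> GI" "z \<noteq> 0"
  shows "\<exists>k w. w \<in> GO \<and> z = (1 + \<i>) ^ k * w"
  using assms
proof (induction "gn z" arbitrary: z rule: less_induct)
  case less
  show ?case
  proof (cases "z \<in> GO")
    case True then show ?thesis by (rule_tac x=0 in exI) auto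
  next
    case False
    then obtain z' where z': "z' \<in> GI" "z = (1 + \<i>) * z'" using GO_not_dvd less.prems unfolding gdvd_def by blast
    have "z' \<noteq> 0" using z' less.prems by auto
    then have "gn z' \<noteq> 0" using gn_0_iff z' by simp
    have "gn z = 2 * gn z'" using z' gn_mult gn_onei by simp
    then have "gn z' < gn z" using \<open>gn z' \<noteq> 0\<close> by simp
    then obtain k w where "w \<in> GO" "z' = (1 + \<i>) ^ k * w" using less.hyps z' \<open>z' \<noteq> 0\<close> by blast
    then show ?thesis using z' by (rule_tac x="Suc k" in exI) (auto simp: algebra_simps)
  qed
qed



lemma gdvd_GI: "gdvd d w \<Longrightarrow> d \<in> GI \<Longrightarrow> w \<in> GI" unfolding gdvd_def by auto

lemma prime_of_min:
  assumes w: "w \<in> GI" "w \<noteq> 0"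
    and p: "p \<in> GI" "gdvd p w" "p \<notin> GU"
    and pmin: "\<And>d. d \<in> GI \<Longrightarrow> gdvd d w \<Longrightarrow> d \<notin> GU \<Longrightarrow> gn p \<le> gn d"
  shows "gprime p"
proof -
  have pnz: "p \<noteq> 0" using p(2) w(2) unfolding gdvd_def by auto
  have "gdvd p b" if ab: "a \<in> GI" "b \<in> GI" "gdvd p (a * b)" "\<not> gdvd p a" for a b
  proof -
    have "gcoprime p a" unfolding gcoprime_def
    proof (intro ballI impI)
      fix d assume d: "d \<in> GI" "gdvd d p \<and> gdvd d a"
      show "d \<in> GU"
      proof (rule ccontr)
        assume dn: "d \<notin> GU"
        obtain e where e: "e \<in> GI" "p = d * e" using d unfolding gdvd_def by auto
        have "gdvd d w" using d p gdvd_trans by blast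
        then have "gn p \<le> gn d" using pmin d dn by blast
        moreover have "gn p = gn d * gn e" using e gn_mult d by simp
        moreover have "gn d \<noteq> 0" using gn_0_iff d e pnz by auto
        moreover have "gn e \<noteq> 0" using gn_0_iff e pnz by auto
        ultimately have "gn e = 1" by (metis le_antisym le_square mult.comm_neutral mult_le_cancel1 nat_less_le not_less_eq_eq mult_le_mono2 One_nat_def Suc_leI neq0_conv)
        then have "e \<in> GU" using gn_1_iff e by simp
        then obtain v where v: "v \<in> GU" "e * v = 1" using GU_inv by blast
        have "d = p * v" using e v by (metis mult.assoc mult_1_right)
        then have "gdvd p d" unfolding gdvd_def using v GU_GI by blast
        then have "gdvd p a" using d gdvd_trans by blast
        then show False using ab by simp
      qed
    qed
    then show ?thesis using euclid p ab by blast
  qed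
  then show ?thesis unfolding gprime_def using p pnz by blast
qed

lemma factor:
  assumes "w \<in> GO"
  shows "\<exists>u\<in>GU. \<exists>P a. finite P \<and> (\<forall>p\<in>P. gprime p \<and> p \<in> GOI) \<and> w = u * (\<Prod>p\<in>P. p ^ a p)"
  using assms
proof (induction "gn w" arbitrary: w rule: less_induct)
  case less
  have wGI: "w \<in> GI" and wnz: "w \<noteq> 0" using less.prems GO_GI GO_nz by auto
  show ?case
  proof (cases "w \<in> GU")
    case True
    then show ?thesis by (rule_tac bexI[of _ w]) (auto intro!: exI[of _ "{}"])
  next
    case False
    define D where "D = {d. d \<in> GI \<and> gdvd d w \<and> d \<notin> GU}"
    have "w \<in> D" unfolding D_def using wGI False gdvd_refl by auto
    then obtain q where qD: "q \<in> D" and qmin: "\<And>d. d \<in> D \<Longrightarrow> gn q \<le> gn d"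
      using ex_has_least_nat[of "\<lambda>d. d \<in> D" w gn] by blast
    have q: "q \<in> GI" "gdvd q w" "q \<notin> GU" using qD unfolding D_def by auto
    have "q \<in> GO" using GO_dvd q less.prems by blast
    then obtain v where v: "v \<in> GU" "v * q \<in> GOI" using GOI_assoc by blast
    define p where "p = v * q"
    obtain v' where v': "v' \<in> GU" "v * v' = 1" using GU_inv v by blast
    have pGI: "p \<in> GI" unfolding p_def using v q GU_GI by auto
    have gnp: "gn p = gn q" unfolding p_def using gn_mult v q GU_GI gn_1_iff by simp
    have pdw: "gdvd p w"
    proof -
      have "q = p * v'" unfolding p_def using v' by (simp add: algebra_simps)
      then have "gdvd p q" unfolding gdvd_def using v' GU_GI by blast
      then show ?thesis using q gdvd_trans by blast
    qed
    have pnu: "p \<notin> GU"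
    proof
      assume "p \<in> GU"
      then have "v' * p \<in> GU" using v' GU_mult by blast
      moreover have "v' * p = q" unfolding p_def using v' by (simp add: algebra_simps)
      ultimately show False using q by simp
    qed
    have gp: "gprime p"
      by (rule prime_of_min[OF wGI wnz pGI pdw pnu]) (use qmin gnp D_def in auto)
    obtain w' where w': "w' \<in> GI" "w = p * w'" using pdw unfolding gdvd_def by blast
    have "w' \<in> GO" using GO_dvd w' less.prems gdvd_def pGI by (metis gdvd_mult_left gdvd_refl)
    have "gn p \<noteq> 0" "gn p \<noteq> 1" using gn_0_iff gn_1_iff pGI pnu gp unfolding gprime_def by auto
    moreover have "gn w = gn p * gn w'" using w' gn_mult pGI by simp
    moreover have "gn w' \<noteq> 0" using gn_0_iff w' wnz by auto
    ultimately have "gn w' < gn w" by simp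
    then obtain u P' a' where IH: "u \<in> GU" "finite P'" "\<forall>r\<in>P'. gprime r \<and> r \<in> GOI"
        "w' = u * (\<Prod>r\<in>P'. r ^ a' r)"
      using less.hyps \<open>w' \<in> GO\<close> by blast
    define a where "a = a'(p := Suc (if p \<in> P' then a' p else 0))"
    define P where "P = insert p P'"
    have "(\<Prod>r\<in>P. r ^ a r) = p ^ a p * (\<Prod>r\<in>P' - {p}. r ^ a r)"
      unfolding P_def using IH(2) by (simp add: prod.insert_remove)
    also have "(\<Prod>r\<in>P' - {p}. r ^ a r) = (\<Prod>r\<in>P' - {p}. r ^ a' r)"
      unfolding a_def by (rule prod.cong) auto
    also have "p ^ a p * (\<Prod>r\<in>P' - {p}. r ^ a' r) = p * (\<Prod>r\<in>P'. r ^ a' r)"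
    proof (cases "p \<in> P'")
      case True
      then show ?thesis unfolding a_def using IH(2) by (simp add: prod.remove)
    next
      case False
      then show ?thesis unfolding a_def by simp
    qed
    finally have "w = u * (\<Prod>r\<in>P. r ^ a r)" using w' IH(4) by (simp add: algebra_simps)
    moreover have "finite P" "\<forall>r\<in>P. gprime r \<and> r \<in> GOI" unfolding P_def p_def using IH v gp p_def by auto
    ultimately show ?thesis using IH(1) by blast
  qed
qed



lemma GOI_sq: assumes "X \<in> GOI" shows "\<exists>n::int. Re (X^2) = 1 + 4 * of_int n"
proof -
  obtain a b where X: "X = Complex (of_int a) (of_int b)" using assms GOI_GO GO_GI GI_cases by blast
  have h: "odd (a + b)" "a mod 4 = 1" using assms X GOI_iff by auto
  then obtain k where k: "a = 4 * k + 1" by (metis add.commute mult.commute mod_mult_div_eq)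
  have "even b" using h k by presburger
  then obtain l where l: "b = 2 * l" by (rule evenE)
  have "Re (X^2) = of_int (a^2 - b^2)" unfolding X by (simp add: power2_eq_square)
  also have "a^2 - b^2 = 1 + 4 * (4*k^2 + 2*k - l^2)" unfolding k l by (simp add: power2_eq_square algebra_simps)
  finally show ?thesis by (rule_tac x="4*k^2 + 2*k - l^2" in exI) simp
qed

lemma mod4_contra:
  assumes "X \<in> GOI" "Z \<in> GOI" "T \<in> GI" "\<sigma> = 1 \<or> \<sigma> = -1" "X^2 + Z^2 = 4 * \<sigma> * T^2"
  shows False
proof -
  obtain n1 where n1: "Re (X^2) = 1 + 4 * of_int n1" using GOI_sq assms by blast
  obtain n2 where n2: "Re (Z^2) = 1 + 4 * of_int n2" using GOI_sq assms by blast
  obtain e f where T: "T = Complex (of_int e) (of_int f)" using assms GI_cases by blast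
  have "Re (4 * \<sigma> * T^2) = 4 * of_int (if \<sigma> = 1 then e^2 - f^2 else f^2 - e^2)"
    using assms(4) unfolding T by (auto simp: power2_eq_square)
  then have "(1 + 4 * of_int n1) + (1 + 4 * of_int n2) = (4 * of_int (if \<sigma> = 1 then e^2 - f^2 else f^2 - e^2) :: real)"
    using arg_cong[OF assms(5), of Re] n1 n2 by simp
  then have "(1 + 4 * n1) + (1 + 4 * n2) = (4 * (if \<sigma> = 1 then e^2 - f^2 else f^2 - e^2) :: int)"
    by linarith
  then have "2 = 4 * ((if \<sigma> = 1 then e^2 - f^2 else f^2 - e^2) - n1 - n2)" by (simp add: algebra_simps)
  then obtain x :: int where "2 = 4 * x" by blast
  then show False by presburger
qed

lemma k_not_1:
  assumes "O1 \<in> GO" "O2 \<in> GO" "w \<in> GO" "O1^2 + ((1+\<i>) * w)^2 + O2^2 = 0"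
  shows False
proof -
  obtain a b where A: "O1 = Complex (of_int a) (of_int b)" using assms GO_GI GI_cases by blast
  obtain c d where C: "O2 = Complex (of_int c) (of_int d)" using assms GO_GI GI_cases by blast
  obtain e f where W: "w = Complex (of_int e) (of_int f)" using assms GO_GI GI_cases by blast
  have o: "odd (a+b)" "odd (c+d)" "odd (e+f)" using assms A C W GO_iff by auto
  have "Im (O1^2 + ((1+\<i>) * w)^2 + O2^2) = 2 * of_int (a*b + c*d + (e^2 - f^2))"
    unfolding A C W by (simp add: power2_eq_square algebra_simps)
  moreover have "Im (O1^2 + ((1+\<i>) * w)^2 + O2^2) = 0" using assms(4) by simp
  ultimately have "2 * (of_int (a*b + c*d + (e^2 - f^2)) :: real) = 0" by linarith
  then have "a*b + c*d + (e^2 - f^2) = 0" by (metis mult_eq_0_iff of_int_eq_0_iff zero_neq_numeral)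
  moreover have "even (a*b)" "even (c*d)" "odd (e^2 - f^2)" using o by auto
  ultimately show False by (metis even_add even_zero)
qed

lemma core:
  assumes O1: "O1 \<in> GO" and O2: "O2 \<in> GO" and E: "E \<in> GI" "E \<notin> GO" "E \<noteq> 0"
    and eq: "O1^2 + E^2 + O2^2 = 0" and c1: "gcoprime O1 E" and c2: "gcoprime O2 E"
  shows "\<exists>v1\<in>GU. \<exists>v2\<in>GU. \<exists>v3\<in>GU. \<exists>X Y Z.
     ((X = v1 * O1 \<and> Z = v3 * O2) \<or> (X = v3 * O2 \<and> Z = v1 * O1)) \<and> Y = v2 * E \<and>
     X^2 + Y^2 = Z^2 \<and> X \<in> GOI \<and> Z \<in> GOI \<and>
     (\<exists>a1::nat. \<exists>P::complex set. \<exists>a::complex \<Rightarrow> nat.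
        finite P \<and> (\<forall>p\<in>P. gprime p \<and> p \<in> GOI) \<and>
        Y = (1 + \<i>) ^ (2 + a1) * (\<Prod>p\<in>P. p ^ a p)) \<and>
     gcoprime X Y \<and> X * Y * Z \<noteq> 0"
proof -
  obtain k w where w: "w \<in> GO" "E = (1 + \<i>) ^ k * w" using twoadic E by blast
  have "k \<noteq> 0"
  proof
    assume "k = 0" then have "E = w" using w by simp
    then show False using w E by simp
  qed
  moreover have "k \<noteq> 1" using w eq O1 O2 k_not_1 by auto
  ultimately obtain j where j: "k = 2 + j" by (metis add_2_eq_Suc not0_implies_Suc One_nat_def)
  obtain u P a where f: "u \<in> GU" "finite P" "\<forall>p\<in>P. gprime p \<and> p \<in> GOI" "w = u * (\<Prod>p\<in>P. p ^ a p)"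
    using factor w by blast
  obtain v2 where v2: "v2 \<in> GU" "u * v2 = 1" using GU_inv f by blast
  define Y where "Y = v2 * E"
  have Yf: "Y = (1 + \<i>) ^ (2 + j) * (\<Prod>p\<in>P. p ^ a p)"
    unfolding Y_def w j f(4) using v2(2) by (simp add: algebra_simps)
  define T where "T = (1 + \<i>) ^ j * (\<Prod>p\<in>P. p ^ a p)"
  have TGI: "T \<in> GI" unfolding T_def using f(3) unfolding gprime_def by (auto intro!: GI_prod)
  have YT: "Y^2 = -4 * T^2" unfolding Yf T_def by (simp add: power2_eq_square algebra_simps power_add)
  obtain v1 where v1: "v1 \<in> GU" "v1 * O1 \<in> GOI" using GOI_assoc O1 by blast
  obtain v3 where v3: "v3 \<in> GU" "v3 * O2 \<in> GOI" using GOI_assoc O2 by blast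
  define X0 where "X0 = v1 * O1"
  define Z0 where "Z0 = v3 * O2"
  define s1 where "s1 = v1^2"
  define s2 where "s2 = v2^2"
  define s3 where "s3 = v3^2"
  have s: "s1 = 1 \<or> s1 = -1" "s2 = 1 \<or> s2 = -1" "s3 = 1 \<or> s3 = -1"
    unfolding s1_def s2_def s3_def using GU_sq v1 v2 v3 by auto
  have ss: "s1 * s1 = 1" "s2 * s2 = 1" "s3 * s3 = 1" using s by auto
  have "O1^2 = s1 * X0^2" unfolding X0_def s1_def using ss(1) unfolding s1_def
    by (simp add: power_mult_distrib algebra_simps)
  moreover have "O2^2 = s3 * Z0^2" unfolding Z0_def s3_def using ss(3) unfolding s3_def
    by (simp add: power_mult_distrib algebra_simps)
  moreover have "E^2 = s2 * Y^2" unfolding Y_def s2_def using ss(2) unfolding s2_def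
    by (simp add: power_mult_distrib algebra_simps)
  ultimately have eq2: "s1 * X0^2 + s2 * Y^2 + s3 * Z0^2 = 0" using eq by simp
  have X0: "X0 \<in> GOI" and Z0: "Z0 \<in> GOI" using v1 v3 X0_def Z0_def by auto
  have s31: "s3 = - s1"
  proof (rule ccontr)
    assume "s3 \<noteq> - s1"
    then have "s3 = s1" using s by auto
    then have "X0^2 + Z0^2 = 4 * (s1 * s2) * T^2" using eq2 YT s(1,2)
      by (elim disjE) (simp_all, algebra+)
    moreover have "s1 * s2 = 1 \<or> s1 * s2 = -1" using s by auto
    ultimately show False using mod4_contra X0 Z0 TGI by blast
  qed
  have eq3: "X0^2 + (s1 * s2) * Y^2 = Z0^2" using eq2 s31 s(1,2)
    by (elim disjE) (simp_all, algebra+)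
  have nz: "X0 \<noteq> 0" "Z0 \<noteq> 0" "Y \<noteq> 0" using X0 Z0 GOI_GO GO_nz E(3) v2 GU_nz Y_def by auto
  have cX: "gcoprime X0 Y" unfolding X0_def Y_def using gcoprime_units c1 v1 v2 by blast
  have cZ: "gcoprime Z0 Y" unfolding Z0_def Y_def using gcoprime_units c2 v3 v2 by blast
  have fac: "\<exists>a1::nat. \<exists>P::complex set. \<exists>a::complex \<Rightarrow> nat.
        finite P \<and> (\<forall>p\<in>P. gprime p \<and> p \<in> GOI) \<and> Y = (1 + \<i>) ^ (2 + a1) * (\<Prod>p\<in>P. p ^ a p)"
    using Yf f by blast
  have "s1 * s2 = 1 \<or> s1 * s2 = -1" using s by auto
  then show ?thesis
  proof
    assume "s1 * s2 = 1"
    then have "X0^2 + Y^2 = Z0^2" using eq3 by simp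
    moreover have "X0 * Y * Z0 \<noteq> 0" using nz by simp
    ultimately have "((X0 = v1 * O1 \<and> Z0 = v3 * O2) \<or> (X0 = v3 * O2 \<and> Z0 = v1 * O1)) \<and> Y = v2 * E \<and>
     X0^2 + Y^2 = Z0^2 \<and> X0 \<in> GOI \<and> Z0 \<in> GOI \<and>
     (\<exists>a1::nat. \<exists>P::complex set. \<exists>a::complex \<Rightarrow> nat.
        finite P \<and> (\<forall>p\<in>P. gprime p \<and> p \<in> GOI) \<and>
        Y = (1 + \<i>) ^ (2 + a1) * (\<Prod>p\<in>P. p ^ a p)) \<and>
     gcoprime X0 Y \<and> X0 * Y * Z0 \<noteq> 0" using X0 Z0 fac cX unfolding X0_def Z0_def Y_def by blast
    then show ?thesis using v1(1) v2(1) v3(1) by blast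
  next
    assume "s1 * s2 = -1"
    then have "Z0^2 + Y^2 = X0^2" using eq3 by (simp add: algebra_simps)
    moreover have "Z0 * Y * X0 \<noteq> 0" using nz by simp
    ultimately have "((Z0 = v1 * O1 \<and> X0 = v3 * O2) \<or> (Z0 = v3 * O2 \<and> X0 = v1 * O1)) \<and> Y = v2 * E \<and>
     Z0^2 + Y^2 = X0^2 \<and> Z0 \<in> GOI \<and> X0 \<in> GOI \<and>
     (\<exists>a1::nat. \<exists>P::complex set. \<exists>a::complex \<Rightarrow> nat.
        finite P \<and> (\<forall>p\<in>P. gprime p \<and> p \<in> GOI) \<and>
        Y = (1 + \<i>) ^ (2 + a1) * (\<Prod>p\<in>P. p ^ a p)) \<and>
     gcoprime Z0 Y \<and> Z0 * Y * X0 \<noteq> 0" using X0 Z0 fac cZ unfolding X0_def Z0_def Y_def by blast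
    then show ?thesis using v1(1) v2(1) v3(1) by blast
  qed
qed



lemma parity3:
  assumes "x \<in> GI" "y \<in> GI" "z \<in> GI" "x^2 + y^2 + z^2 = 0"
  shows "(x \<in> GO \<and> y \<in> GO \<and> z \<notin> GO) \<or> (x \<in> GO \<and> y \<notin> GO \<and> z \<in> GO) \<or>
         (x \<notin> GO \<and> y \<in> GO \<and> z \<in> GO) \<or> (x \<notin> GO \<and> y \<notin> GO \<and> z \<notin> GO)"
proof -
  obtain a b where A: "x = Complex (of_int a) (of_int b)" using assms GI_cases by blast
  obtain c d where C: "y = Complex (of_int c) (of_int d)" using assms GI_cases by blast
  obtain e f where F: "z = Complex (of_int e) (of_int f)" using assms GI_cases by blast
  have "Re (x^2 + y^2 + z^2) = of_int ((a^2 - b^2) + (c^2 - d^2) + (e^2 - f^2))"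
    unfolding A C F by (simp add: power2_eq_square)
  moreover have "Re (x^2 + y^2 + z^2) = 0" using assms(4) by simp
  ultimately have "(a^2 - b^2) + (c^2 - d^2) + (e^2 - f^2) = 0" by (metis of_int_eq_0_iff)
  then have "even ((a^2 - b^2) + (c^2 - d^2) + (e^2 - f^2))" by simp
  then have "even ((a + b) + (c + d) + (e + f))" by auto
  then show ?thesis unfolding A C F GO_iff by auto
qed

definition goodXYZ :: "complex \<Rightarrow> complex \<Rightarrow> complex \<Rightarrow> bool" where
  "goodXYZ X Y Z \<longleftrightarrow> X^2 + Y^2 = Z^2 \<and> X \<in> GOI \<and> Z \<in> GOI \<and>
               (\<exists>a1::nat. \<exists>P::complex set. \<exists>a::complex \<Rightarrow> nat.
                  finite P \<and> (\<forall>p\<in>P. gprime p \<and> p \<in> GOI) \<and>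
                  Y = (1 + \<i>) ^ (2 + a1) * (\<Prod>p\<in>P. p ^ a p)) \<and>
               gcoprime X Y \<and> X * Y * Z \<noteq> 0"

lemma core':
  assumes "O1 \<in> GO" "O2 \<in> GO" "E \<in> GI" "E \<notin> GO" "E \<noteq> 0"
    "O1^2 + E^2 + O2^2 = 0" "gcoprime O1 E" "gcoprime O2 E"
  obtains v1 v2 v3 X Y Z where "v1 \<in> GU" "v2 \<in> GU" "v3 \<in> GU"
    "(X = v1 * O1 \<and> Z = v3 * O2) \<or> (X = v3 * O2 \<and> Z = v1 * O1)" "Y = v2 * E" "goodXYZ X Y Z"
proof -
  from core[OF assms] obtain v1 v2 v3 X Y Z where "v1 \<in> GU" "v2 \<in> GU" "v3 \<in> GU"
    "(X = v1 * O1 \<and> Z = v3 * O2) \<or> (X = v3 * O2 \<and> Z = v1 * O1)" "Y = v2 * E" "goodXYZ X Y Z"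
    unfolding goodXYZ_def by (elim bexE exE conjE) blast
  then show ?thesis using that by blast
qed

lemma main1:
  assumes G: "\<alpha> \<in> GI" "\<beta> \<in> GI" "\<gamma> \<in> GI" and eq: "\<alpha>^2 + \<beta>^2 + \<gamma>^2 = 0"
    and nz: "\<alpha> * \<beta> * \<gamma> \<noteq> 0" and cp: "gcoprime \<alpha> \<beta>"
  shows "\<exists>u1\<in>GU. \<exists>u2\<in>GU. \<exists>u3\<in>GU. \<exists>X Y Z.
               mset [X, Y, Z] = mset [u1 * \<alpha>, u2 * \<beta>, u3 * \<gamma>] \<and> goodXYZ X Y Z"
proof -
  have nz': "\<alpha> \<noteq> 0" "\<beta> \<noteq> 0" "\<gamma> \<noteq> 0" using nz by auto
  have cab: "gcoprime \<alpha> \<gamma>" using cop3 G eq cp by blast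
  have cbc: "gcoprime \<beta> \<gamma>"
    using cop3[of \<beta> \<alpha> \<gamma>] G eq gcoprime_sym[OF cp] by (simp add: add.commute add.left_commute)
  have eq1: "\<alpha>^2 + \<gamma>^2 + \<beta>^2 = 0" using eq by (simp add: algebra_simps)
  have eq2: "\<beta>^2 + \<alpha>^2 + \<gamma>^2 = 0" using eq by (simp add: algebra_simps)
  consider "\<alpha> \<in> GO" "\<beta> \<in> GO" "\<gamma> \<notin> GO" | "\<alpha> \<in> GO" "\<beta> \<notin> GO" "\<gamma> \<in> GO"
    | "\<alpha> \<notin> GO" "\<beta> \<in> GO" "\<gamma> \<in> GO" | "\<alpha> \<notin> GO" "\<beta> \<notin> GO" "\<gamma> \<notin> GO"
    using parity3[OF G eq] by blast
  then show ?thesis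
  proof cases
    case 1
    obtain v1 v2 v3 X Y Z where v: "v1 \<in> GU" "v2 \<in> GU" "v3 \<in> GU"
      and xz: "(X = v1 * \<alpha> \<and> Z = v3 * \<beta>) \<or> (X = v3 * \<beta> \<and> Z = v1 * \<alpha>)" and y: "Y = v2 * \<gamma>"
      and g: "goodXYZ X Y Z"
      by (rule core'[OF 1(1) 1(2) G(3) 1(3) nz'(3) eq1 cab cbc])
    have "mset [X, Y, Z] = mset [v1 * \<alpha>, v3 * \<beta>, v2 * \<gamma>]" using xz y by (elim disjE conjE) (simp_all add: add_mset_commute)
    then show ?thesis using v g by blast
  next
    case 2
    obtain v1 v2 v3 X Y Z where v: "v1 \<in> GU" "v2 \<in> GU" "v3 \<in> GU"
      and xz: "(X = v1 * \<alpha> \<and> Z = v3 * \<gamma>) \<or> (X = v3 * \<gamma> \<and> Z = v1 * \<alpha>)" and y: "Y = v2 * \<beta>"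
      and g: "goodXYZ X Y Z"
      by (rule core'[OF 2(1) 2(3) G(2) 2(2) nz'(2) eq cp gcoprime_sym[OF cbc]])
    have "mset [X, Y, Z] = mset [v1 * \<alpha>, v2 * \<beta>, v3 * \<gamma>]" using xz y by (elim disjE conjE) (simp_all add: add_mset_commute)
    then show ?thesis using v g by blast
  next
    case 3
    obtain v1 v2 v3 X Y Z where v: "v1 \<in> GU" "v2 \<in> GU" "v3 \<in> GU"
      and xz: "(X = v1 * \<beta> \<and> Z = v3 * \<gamma>) \<or> (X = v3 * \<gamma> \<and> Z = v1 * \<beta>)" and y: "Y = v2 * \<alpha>"
      and g: "goodXYZ X Y Z"
      by (rule core'[OF 3(2) 3(3) G(1) 3(1) nz'(1) eq2 gcoprime_sym[OF cp] gcoprime_sym[OF cab]])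
    have "mset [X, Y, Z] = mset [v2 * \<alpha>, v1 * \<beta>, v3 * \<gamma>]" using xz y by (elim disjE conjE) (simp_all add: add_mset_commute)
    then show ?thesis using v g by blast
  next
    case 4
    then have "gdvd (1 + \<i>) \<alpha>" "gdvd (1 + \<i>) \<beta>" using GO_not_dvd G by auto
    then have "1 + \<i> \<in> GU" using cp onei_GI unfolding gcoprime_def by blast
    then show ?thesis using onei_notGU by blast
  qed
qed

theorem theorem4p3:
  shows "(\<forall>\<alpha>\<in>GI. \<forall>\<beta>\<in>GI. \<forall>\<gamma>\<in>GI.
            \<alpha>^2 + \<beta>^2 + \<gamma>^2 = 0 \<and> \<alpha> * \<beta> * \<gamma> \<noteq> 0 \<and> gcoprime \<alpha> \<beta> \<longrightarrow>
            (\<exists>u1\<in>GU. \<exists>u2\<in>GU. \<exists>u3\<in>GU. \<exists>X Y Z.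
               mset [X, Y, Z] = mset [u1 * \<alpha>, u2 * \<beta>, u3 * \<gamma>] \<and>
               X^2 + Y^2 = Z^2 \<and> X \<in> GOI \<and> Z \<in> GOI \<and>
               (\<exists>a1::nat. \<exists>P::complex set. \<exists>a::complex \<Rightarrow> nat.
                  finite P \<and> (\<forall>p\<in>P. gprime p \<and> p \<in> GOI) \<and>
                  Y = (1 + \<i>) ^ (2 + a1) * (\<Prod>p\<in>P. p ^ a p)) \<and>
               gcoprime X Y \<and> X * Y * Z \<noteq> 0)) \<and>
         (\<forall>X\<in>GI. \<forall>Y\<in>GI. \<forall>Z\<in>GI.
            X^2 + Y^2 = Z^2 \<and> gcoprime X Y \<and> X * Y * Z \<noteq> 0 \<longrightarrow>
            X^2 + Y^2 + (\<i> * Z)^2 = 0 \<and> \<i> * Z \<in> GI \<and> gcoprime X Y \<and> X * Y * (\<i> * Z) \<noteq> 0)"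
proof (rule conjI)
  show "\<forall>\<alpha>\<in>GI. \<forall>\<beta>\<in>GI. \<forall>\<gamma>\<in>GI.
            \<alpha>^2 + \<beta>^2 + \<gamma>^2 = 0 \<and> \<alpha> * \<beta> * \<gamma> \<noteq> 0 \<and> gcoprime \<alpha> \<beta> \<longrightarrow>
            (\<exists>u1\<in>GU. \<exists>u2\<in>GU. \<exists>u3\<in>GU. \<exists>X Y Z.
               mset [X, Y, Z] = mset [u1 * \<alpha>, u2 * \<beta>, u3 * \<gamma>] \<and>
               X^2 + Y^2 = Z^2 \<and> X \<in> GOI \<and> Z \<in> GOI \<and>
               (\<exists>a1::nat. \<exists>P::complex set. \<exists>a::complex \<Rightarrow> nat.
                  finite P \<and> (\<forall>p\<in>P. gprime p \<and> p \<in> GOI) \<and>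
                  Y = (1 + \<i>) ^ (2 + a1) * (\<Prod>p\<in>P. p ^ a p)) \<and>
               gcoprime X Y \<and> X * Y * Z \<noteq> 0)"
  proof (intro ballI impI)
    fix \<alpha> \<beta> \<gamma> assume G: "\<alpha> \<in> GI" "\<beta> \<in> GI" "\<gamma> \<in> GI"
      and h: "\<alpha>^2 + \<beta>^2 + \<gamma>^2 = 0 \<and> \<alpha> * \<beta> * \<gamma> \<noteq> 0 \<and> gcoprime \<alpha> \<beta>"
    have "\<exists>u1\<in>GU. \<exists>u2\<in>GU. \<exists>u3\<in>GU. \<exists>X Y Z.
               mset [X, Y, Z] = mset [u1 * \<alpha>, u2 * \<beta>, u3 * \<gamma>] \<and> goodXYZ X Y Z"
      using h by (intro main1[OF G]) auto
    then show "\<exists>u1\<in>GU. \<exists>u2\<in>GU. \<exists>u3\<in>GU. \<exists>X Y Z.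
               mset [X, Y, Z] = mset [u1 * \<alpha>, u2 * \<beta>, u3 * \<gamma>] \<and>
               X^2 + Y^2 = Z^2 \<and> X \<in> GOI \<and> Z \<in> GOI \<and>
               (\<exists>a1::nat. \<exists>P::complex set. \<exists>a::complex \<Rightarrow> nat.
                  finite P \<and> (\<forall>p\<in>P. gprime p \<and> p \<in> GOI) \<and>
                  Y = (1 + \<i>) ^ (2 + a1) * (\<Prod>p\<in>P. p ^ a p)) \<and>
               gcoprime X Y \<and> X * Y * Z \<noteq> 0"
      unfolding goodXYZ_def .
  qed
next
  show "\<forall>X\<in>GI. \<forall>Y\<in>GI. \<forall>Z\<in>GI.
            X^2 + Y^2 = Z^2 \<and> gcoprime X Y \<and> X * Y * Z \<noteq> 0 \<longrightarrow>
            X^2 + Y^2 + (\<i> * Z)^2 = 0 \<and> \<i> * Z \<in> GI \<and> gcoprime X Y \<and> X * Y * (\<i> * Z) \<noteq> 0"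
  proof (intro ballI impI)
    fix X Y Z assume G: "X \<in> GI" "Y \<in> GI" "Z \<in> GI"
      and h: "X^2 + Y^2 = Z^2 \<and> gcoprime X Y \<and> X * Y * Z \<noteq> 0"
    have "(\<i> * Z)^2 = -(Z^2)" by (simp add: power_mult_distrib)
    then have "X^2 + Y^2 + (\<i> * Z)^2 = 0" using h by simp
    moreover have "\<i> * Z \<in> GI" using G by auto
    moreover have "X * Y * (\<i> * Z) \<noteq> 0" using h by simp
    ultimately show "X^2 + Y^2 + (\<i> * Z)^2 = 0 \<and> \<i> * Z \<in> GI \<and> gcoprime X Y \<and> X * Y * (\<i> * Z) \<noteq> 0"
      using h by blast
  qed
qed

end
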